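(* Let $\mathcal C\subseteq2^{[n]}$ be a stable hyperplane code. Then the polar complex $\Gamma(\mathcal C)$ is shellable.
   Context: A code is a subset $\mathcal C\subseteq 2^{[n]}$. An oriented affine hyperplane in $\mathbb R^d$ is $H=\{x:w\cdot x-h=0\}$, $w\ne0$, with $H^+=\{w\cdot x-h>0\}$. For $\mathcal H=\{H_1,\dots,H_n\}$ and open convex $X\subseteq\mathbb R^d$, the atom of $\sigma\subseteq[n]$ is $A_\sigma=\bigl(\bigcap_{i\in\sigma}(H_i^+\cap X)\bigr)\setminus\bigcup_{j\notin\sigma}H_j^+$ ($A_\emptyset=X\setminus\bigcup_iH_i^+$), and $\mathrm{code}(\mathcal H,X)=\{\sigma:A_\sigma\ne\emptyset\}$. $(\mathcal H,X)$ is stable if $X$ is open convex and whenever $X\cap\bigcap_{i\in\sigma}H_i\ne\emptyset$, $\dim\bigcap_{i\in\sigma}H_i=d-|\sigma|$; a stable hyperplane code is the code of a stable pair. The polar complex $\Gamma(\mathcal C)$ is the simplicial complex on vertex set $[n]\sqcup\{\bar1,\dots,\bar n\}$ consisting of all subsets of the sets $\Sigma(\sigma)=\sigma\sqcup\{\bar i:i\in[n]\setminus\sigma\}$, $\sigma\in\mathcal C$; it is pure of dimension $n-1$. A pure $k$-dimensional simplicial complex is shellable if its facets admit an ordering $F_1,\dots,F_t$ such that for each $i>1$ the complex $\Delta(\{F_i\})\cap\Delta(\{F_1,\dots,F_{i-1}\})$ is pure of dimension $k-1$, where $\Delta(\mathcal F)$ denotes the set of all subsets of members of $\mathcal F$.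 *)

theory Defs
  imports "HOL-Analysis.Analysis"
begin

text \<open>Hyperplanes are indexed by [n] = {1..n}; hyperplane i is given by
  normal vector w i (nonzero) and offset h i: H_i = {x. w i \<bullet> x - h i = 0},
  H_i^+ = {x. w i \<bullet> x - h i > 0}. The ambient space R^d is an arbitrary
  euclidean_space type 'a, d = DIM('a).\<close>

definition hyp :: "'a::euclidean_space \<Rightarrow> real \<Rightarrow> 'a set" where
  "hyp v c = {x. v \<bullet> x - c = 0}"

definition hyp_pos :: "'a::euclidean_space \<Rightarrow> real \<Rightarrow> 'a set" where
  "hyp_pos v c = {x. v \<bullet> x - c > 0}"

definition atom :: "nat \<Rightarrow> (nat \<Rightarrow> 'a::euclidean_space) \<Rightarrow> (nat \<Rightarrow> real) \<Rightarrow> 'a set \<Rightarrow> nat set \<Rightarrow> 'a set" where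
  "atom n w h X \<sigma> =
     {x \<in> X. (\<forall>i\<in>\<sigma>. x \<in> hyp_pos (w i) (h i)) \<and> (\<forall>j\<in>{1..n} - \<sigma>. x \<notin> hyp_pos (w j) (h j))}"

definition hyp_code :: "nat \<Rightarrow> (nat \<Rightarrow> 'a::euclidean_space) \<Rightarrow> (nat \<Rightarrow> real) \<Rightarrow> 'a set \<Rightarrow> nat set set" where
  "hyp_code n w h X = {\<sigma>. \<sigma> \<subseteq> {1..n} \<and> atom n w h X \<sigma> \<noteq> {}}"

definition stable_pair :: "nat \<Rightarrow> (nat \<Rightarrow> 'a::euclidean_space) \<Rightarrow> (nat \<Rightarrow> real) \<Rightarrow> 'a set \<Rightarrow> bool" where
  "stable_pair n w h X \<longleftrightarrow>
     (\<forall>i\<in>{1..n}. w i \<noteq> 0) \<and> open X \<and> convex X \<and>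
     (\<forall>\<sigma>. \<sigma> \<subseteq> {1..n} \<longrightarrow> X \<inter> (\<Inter>i\<in>\<sigma>. hyp (w i) (h i)) \<noteq> {} \<longrightarrow>
         aff_dim (\<Inter>i\<in>\<sigma>. hyp (w i) (h i)) = int DIM('a) - int (card \<sigma>))"

text \<open>Polar complex: vertices Inl i (= i) and Inr i (= bar i), i in [n].\<close>
definition polar_facet :: "nat \<Rightarrow> nat set \<Rightarrow> (nat + nat) set" where
  "polar_facet n \<sigma> = Inl ` \<sigma> \<union> Inr ` ({1..n} - \<sigma>)"

definition polar_complex :: "nat \<Rightarrow> nat set set \<Rightarrow> (nat + nat) set set" where
  "polar_complex n C = {\<tau>. \<exists>\<sigma>\<in>C. \<tau> \<subseteq> polar_facet n \<sigma>}"

definition gen_complex :: "'v set set \<Rightarrow> 'v set set" where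
  "gen_complex F = {\<tau>. \<exists>S\<in>F. \<tau> \<subseteq> S}"

definition facets :: "'v set set \<Rightarrow> 'v set set" where
  "facets K = {F \<in> K. \<forall>G\<in>K. F \<subseteq> G \<longrightarrow> G = F}"

definition pure_dim :: "'v set set \<Rightarrow> int \<Rightarrow> bool" where
  "pure_dim K k \<longleftrightarrow> (\<forall>F\<in>facets K. finite F \<and> int (card F) = k + 1)"

definition shellable :: "'v set set \<Rightarrow> int \<Rightarrow> bool" where
  "shellable K k \<longleftrightarrow> pure_dim K k \<and>
     (\<exists>Fs. distinct Fs \<and> set Fs = facets K \<and>
        (\<forall>i. 0 < i \<and> i < length Fs \<longrightarrow>
            pure_dim (gen_complex {Fs ! i} \<inter> gen_complex (set (take i Fs))) (k - 1)))"

end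

theory Submission
  imports Defs
begin

definition findep :: "'j set \<Rightarrow> ('j \<Rightarrow> 'a::real_vector) \<Rightarrow> bool" where
  "findep D V \<longleftrightarrow> finite D \<and> (\<forall>u. (\<Sum>j\<in>D. u j *\<^sub>R V j) = 0 \<longrightarrow> (\<forall>j\<in>D. u j = 0))"

lemma span_fam:
  fixes V :: "'j \<Rightarrow> 'a::real_vector"
  assumes "finite D" "x \<in> span (V ` D)"
  shows "\<exists>\<mu>. x = (\<Sum>j\<in>D. \<mu> j *\<^sub>R V j)"
proof -
  have fi: "finite (V ` D)" using assms by simp
  obtain u where u: "(\<Sum>v\<in>V ` D. u v *\<^sub>R v) = x" using assms(2) span_finite[OF fi] by auto
  define g where "g = inv_into D V"
  have g: "g ` (V ` D) \<subseteq> D" "inj_on g (V ` D)" "\<forall>v\<in>V ` D. V (g v) = v"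
    unfolding g_def by (auto intro: inv_into_into inj_on_inv_into f_inv_into_f)
  define \<mu> where "\<mu> j = (if j \<in> g ` (V ` D) then u (V j) else 0)" for j
  have "(\<Sum>j\<in>D. \<mu> j *\<^sub>R V j) = (\<Sum>j\<in>g ` (V ` D). \<mu> j *\<^sub>R V j)"
    by (rule sum.mono_neutral_right) (use assms(1) g in \<open>auto simp: \<mu>_def\<close>)
  also have "\<dots> = (\<Sum>v\<in>V ` D. \<mu> (g v) *\<^sub>R V (g v))"
    by (rule sum.reindex[OF g(2), unfolded comp_def])
  also have "\<dots> = (\<Sum>v\<in>V ` D. u v *\<^sub>R v)"
    by (rule sum.cong) (use g in \<open>auto simp: \<mu>_def\<close>)
  finally show ?thesis using u by metis
qed

lemma span_fam_mem:
  fixes V :: "'j \<Rightarrow> 'a::real_vector"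
  shows "(\<Sum>j\<in>D. \<mu> j *\<^sub>R V j) \<in> span (V ` D)"
  by (intro span_sum span_mul span_base) auto

lemma findep_subset: "findep D V \<Longrightarrow> D' \<subseteq> D \<Longrightarrow> findep D' V"
proof (unfold findep_def, intro conjI allI impI ballI)
  assume a: "finite D \<and> (\<forall>u. (\<Sum>j\<in>D. u j *\<^sub>R V j) = 0 \<longrightarrow> (\<forall>j\<in>D. u j = 0))" "D' \<subseteq> D"
  then show "finite D'" using finite_subset by blast
  fix u j assume s: "(\<Sum>j\<in>D'. u j *\<^sub>R V j) = 0" and j: "j \<in> D'"
  define u' where "u' j = (if j \<in> D' then u j else 0)" for j
  have "(\<Sum>j\<in>D. u' j *\<^sub>R V j) = (\<Sum>j\<in>D'. u' j *\<^sub>R V j)"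
    by (rule sum.mono_neutral_right) (use a in \<open>auto simp: u'_def\<close>)
  also have "\<dots> = 0" using s by (simp add: u'_def)
  finally have "u' j = 0" using a j by blast
  then show "u j = 0" using j by (simp add: u'_def)
qed

lemma findep_not_span:
  fixes V :: "'j \<Rightarrow> 'a::real_vector"
  assumes "findep D V" "m \<in> D"
  shows "V m \<notin> span (V ` (D - {m}))"
proof
  assume sp: "V m \<in> span (V ` (D - {m}))"
  have "finite (D - {m})" using assms by (simp add: findep_def)
  then obtain \<mu> where mu: "V m = (\<Sum>j\<in>D - {m}. \<mu> j *\<^sub>R V j)"
    using span_fam[of "D - {m}" "V m" V] sp by blast
  define u where "u j = (if j = m then -1 else \<mu> j)" for j
  have fin: "finite D" using assms by (simp add: findep_def)
  have "(\<Sum>j\<in>D. u j *\<^sub>R V j) = u m *\<^sub>R V m + (\<Sum>j\<in>D - {m}. u j *\<^sub>R V j)"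
    using assms(2) fin by (simp add: sum.remove)
  also have "\<dots> = 0" using mu by (simp add: u_def)
  finally have "u m = 0" using assms by (auto simp: findep_def)
  then show False by (simp add: u_def)
qed

lemma orth_witness:
  fixes V :: "'j \<Rightarrow> 'a::euclidean_space"
  assumes "x \<notin> span (V ` D)"
  shows "\<exists>z. (\<forall>j\<in>D. V j \<bullet> z = 0) \<and> x \<bullet> z > 0 \<and> z \<noteq> 0"
proof -
  obtain y z where yz: "y \<in> span (V ` D)" "\<And>w. w \<in> span (V ` D) \<Longrightarrow> orthogonal z w" "x = y + z"
    using orthogonal_subspace_decomp_exists by blast
  have z0: "z \<noteq> 0" using yz assms by auto
  have "\<forall>j\<in>D. V j \<bullet> z = 0"
  proof
    fix j assume "j \<in> D"
    then have "orthogonal z (V j)" using yz(2) by (simp add: span_base)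
    then show "V j \<bullet> z = 0" by (simp add: orthogonal_def inner_commute)
  qed
  moreover have "x \<bullet> z = z \<bullet> z"
  proof -
    have yz0: "y \<bullet> z = 0" using yz(2)[OF yz(1)] by (simp add: orthogonal_def inner_commute)
    have "x \<bullet> z = y \<bullet> z + z \<bullet> z" using yz(3) by (simp add: inner_add_left)
    then show ?thesis using yz0 by simp
  qed
  ultimately show ?thesis using z0 by auto
qed

lemma findep_solve:
  fixes V :: "'j \<Rightarrow> 'a::euclidean_space"
  assumes "findep D V"
  shows "\<exists>u. \<forall>j\<in>D. V j \<bullet> u = t j"
proof -
  have fin: "finite D" using assms by (simp add: findep_def)
  have "\<forall>m\<in>D. \<exists>z. (\<forall>j\<in>D - {m}. V j \<bullet> z = 0) \<and> V m \<bullet> z > 0"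
    using orth_witness findep_not_span[OF assms] by blast
  then obtain Z where Z: "\<And>m. m\<in>D \<Longrightarrow> (\<forall>j\<in>D - {m}. V j \<bullet> Z m = 0) \<and> V m \<bullet> Z m > 0"
    by metis
  define u where "u = (\<Sum>m\<in>D. (t m / (V m \<bullet> Z m)) *\<^sub>R Z m)"
  have "V j \<bullet> u = t j" if j: "j \<in> D" for j
  proof -
    have "V j \<bullet> u = (\<Sum>m\<in>D. (t m / (V m \<bullet> Z m)) * (V j \<bullet> Z m))"
      by (simp add: u_def inner_sum_right)
    also have "\<dots> = (\<Sum>m\<in>D. if m = j then (t j / (V j \<bullet> Z j)) * (V j \<bullet> Z j) else 0)"
      by (rule sum.cong) (use Z j in auto)
    also have "\<dots> = (t j / (V j \<bullet> Z j)) * (V j \<bullet> Z j)"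
      using fin j by simp
    also have "\<dots> = t j" using Z[OF j] by simp
    finally show ?thesis .
  qed
  then show ?thesis by blast
qed

lemma findep_scale:
  assumes "findep D V" "\<And>j. j \<in> D \<Longrightarrow> s j \<noteq> 0"
  shows "findep D (\<lambda>j. s j *\<^sub>R V j)"
  unfolding findep_def
proof (intro conjI allI impI ballI)
  show "finite D" using assms by (simp add: findep_def)
  fix u j assume u: "(\<Sum>j\<in>D. u j *\<^sub>R s j *\<^sub>R V j) = 0" and j: "j \<in> D"
  have "(\<Sum>j\<in>D. (u j * s j) *\<^sub>R V j) = 0" using u by simp
  have h: "\<And>u'. (\<Sum>j\<in>D. u' j *\<^sub>R V j) = 0 \<Longrightarrow> \<forall>j\<in>D. u' j = 0"
    using assms(1) by (simp add: findep_def)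
  have "u j * s j = 0" using h[of "\<lambda>j. u j * s j"] \<open>(\<Sum>j\<in>D. (u j * s j) *\<^sub>R V j) = 0\<close> j by simp
  then show "u j = 0" using assms(2)[OF j] by simp
qed

lemma findep_insert:
  fixes V :: "'j \<Rightarrow> 'a::real_vector"
  assumes "findep D V" "k \<notin> D" "V k \<notin> span (V ` D)"
  shows "findep (insert k D) V"
  unfolding findep_def
proof (intro conjI allI impI ballI)
  have fin: "finite D" using assms by (simp add: findep_def)
  then show "finite (insert k D)" by simp
  fix u j assume u: "(\<Sum>j\<in>insert k D. u j *\<^sub>R V j) = 0" and j: "j \<in> insert k D"
  have e: "u k *\<^sub>R V k + (\<Sum>j\<in>D. u j *\<^sub>R V j) = 0" using u fin assms(2) by simp
  have uk: "u k = 0"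
  proof (rule ccontr)
    assume nz: "u k \<noteq> 0"
    have "V k = (\<Sum>j\<in>D. (- u j / u k) *\<^sub>R V j)"
    proof -
      have "u k *\<^sub>R V k = - (\<Sum>j\<in>D. u j *\<^sub>R V j)" using e by (simp add: eq_neg_iff_add_eq_0)
      then have "V k = (1 / u k) *\<^sub>R (- (\<Sum>j\<in>D. u j *\<^sub>R V j))"
        using nz by (metis (no_types, lifting) divide_self_if scaleR_one scaleR_scaleR times_divide_eq_left mult.commute divide_inverse_commute)
      also have "\<dots> = (\<Sum>j\<in>D. (- u j / u k) *\<^sub>R V j)"
        by (simp add: scaleR_sum_right divide_inverse mult.commute sum_negf)
      finally show ?thesis .
    qed
    then have "V k \<in> span (V ` D)" using span_fam_mem by metis
    then show False using assms(3) by simp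
  qed
  then have "(\<Sum>j\<in>D. u j *\<^sub>R V j) = 0" using e by simp
  then have "\<forall>j\<in>D. u j = 0" using assms(1) by (simp add: findep_def)
  then show "u j = 0" using j uk by auto
qed

lemma findep_inj:
  fixes V :: "'j \<Rightarrow> 'a::real_vector"
  assumes "findep D V"
  shows "inj_on V D"
proof (rule inj_onI, rule ccontr)
  fix j k assume jk: "j \<in> D" "k \<in> D" "V j = V k" "j \<noteq> k"
  have "V j \<in> span (V ` (D - {j}))" using jk by (intro span_base) auto
  then show False using findep_not_span[OF assms jk(1)] by simp
qed

lemma findep_indep:
  fixes V :: "'j \<Rightarrow> 'a::real_vector"
  assumes "findep D V"
  shows "independent (V ` D)"
proof -
  have fin: "finite D" and inj: "inj_on V D" using assms findep_inj by (auto simp: findep_def)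
  show ?thesis
  proof (rule independent_if_scalars_zero)
    show "finite (V ` D)" using fin by simp
    fix c v assume c: "(\<Sum>v\<in>V ` D. c v *\<^sub>R v) = 0" and v: "v \<in> V ` D"
    have "(\<Sum>j\<in>D. c (V j) *\<^sub>R V j) = 0" using c by (simp add: sum.reindex[OF inj])
    moreover have h: "\<And>u'. (\<Sum>j\<in>D. u' j *\<^sub>R V j) = 0 \<Longrightarrow> \<forall>j\<in>D. u' j = 0"
      using assms(1) by (simp add: findep_def)
    ultimately have "\<forall>j\<in>D. c (V j) = 0" using h[of "\<lambda>j. c (V j)"] by simp
    then show "c v = 0" using v by auto
  qed
qed

lemma findep_card:
  fixes V :: "'j \<Rightarrow> 'a::euclidean_space"
  assumes "findep D V"
  shows "card D \<le> DIM('a)"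
proof -
  have "card (V ` D) \<le> DIM('a)" using independent_bound[OF findep_indep[OF assms]] by simp
  then show ?thesis using card_image[OF findep_inj[OF assms]] by simp
qed

lemma findep_zero:
  fixes V :: "'j \<Rightarrow> 'a::euclidean_space"
  assumes "findep D V" "card D = DIM('a)" "\<And>j. j \<in> D \<Longrightarrow> V j \<bullet> u = 0"
  shows "u = 0"
proof -
  have "UNIV \<subseteq> span (V ` D)"
    by (rule card_ge_dim_independent) (use findep_indep[OF assms(1)] card_image[OF findep_inj[OF assms(1)]] assms(2) in auto)
  then have "u \<in> span (V ` D)" by auto
  moreover have "\<And>y. y \<in> V ` D \<Longrightarrow> orthogonal u y" using assms(3) by (auto simp: orthogonal_def inner_commute)
  ultimately have "orthogonal u u" by (rule orthogonal_to_span)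
  then show ?thesis by (simp add: orthogonal_def)
qed

definition flipm :: "nat \<Rightarrow> nat set \<Rightarrow> nat set" where
  "flipm m \<sigma> = (if m \<in> \<sigma> then \<sigma> - {m} else insert m \<sigma>)"

lemma polar_facet_sub:
  assumes "\<sigma> \<subseteq> {1..n}" "\<sigma>' \<subseteq> {1..n}" "polar_facet n \<sigma> \<subseteq> polar_facet n \<sigma>'"
  shows "\<sigma> = \<sigma>'"
proof (rule set_eqI)
  fix x show "x \<in> \<sigma> \<longleftrightarrow> x \<in> \<sigma>'"
  proof
    assume "x \<in> \<sigma>" then have "Inl x \<in> polar_facet n \<sigma>" by (simp add: polar_facet_def)
    then show "x \<in> \<sigma>'" using assms(3) by (auto simp: polar_facet_def)
  next
    assume x: "x \<in> \<sigma>'"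
    show "x \<in> \<sigma>"
    proof (rule ccontr)
      assume "x \<notin> \<sigma>" then have "Inr x \<in> polar_facet n \<sigma>" using x assms(2) by (auto simp: polar_facet_def)
      then show False using assms(3) x by (auto simp: polar_facet_def)
    qed
  qed
qed


lemma polar_facet_card:
  assumes "\<sigma> \<subseteq> {1..n}"
  shows "finite (polar_facet n \<sigma>) \<and> card (polar_facet n \<sigma>) = n"
proof -
  have f: "finite \<sigma>" using assms finite_subset by blast
  have "card (polar_facet n \<sigma>) = card (Inl ` \<sigma> :: (nat+nat) set) + card (Inr ` ({1..n} - \<sigma>) :: (nat+nat) set)"
    unfolding polar_facet_def by (rule card_Un_disjoint) (use f in auto)
  also have "\<dots> = card \<sigma> + card ({1..n} - \<sigma>)"
    by (simp add: card_image)
  also have "\<dots> = n"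
  proof -
    have "card \<sigma> \<le> n" using card_mono[OF _ assms] by simp
    then show ?thesis using assms f by (simp add: card_Diff_subset)
  qed
  finally show ?thesis using f by (simp add: polar_facet_def)
qed

lemma polar_facet_flip:
  assumes "\<sigma> \<subseteq> {1..n}" "m \<in> {1..n}"
  shows "polar_facet n \<sigma> \<inter> polar_facet n (flipm m \<sigma>) = polar_facet n \<sigma> - {Inl m, Inr m}"
  using assms by (auto simp: polar_facet_def flipm_def)

lemma card_flip_inter:
  assumes "\<sigma> \<subseteq> {1..n}" "m \<in> {1..n}"
  shows "card (polar_facet n \<sigma> - {Inl m, Inr m}) = n - 1"
proof -
  have e: "polar_facet n \<sigma> - {Inl m, Inr m} = polar_facet n \<sigma> - {if m \<in> \<sigma> then Inl m else Inr m}"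
    using assms by (auto simp: polar_facet_def)
  have "(if m \<in> \<sigma> then Inl m else Inr m) \<in> polar_facet n \<sigma>"
    using assms by (auto simp: polar_facet_def)
  then show ?thesis unfolding e using polar_facet_card[OF assms(1)] by (simp add: card_Diff_singleton)
qed

lemma facets_polar:
  assumes "C \<subseteq> Pow {1..n}"
  shows "facets (polar_complex n C) = polar_facet n ` C"
proof
  show "facets (polar_complex n C) \<subseteq> polar_facet n ` C"
  proof
    fix F assume F: "F \<in> facets (polar_complex n C)"
    then obtain \<sigma> where s: "\<sigma> \<in> C" "F \<subseteq> polar_facet n \<sigma>"
      by (auto simp: facets_def polar_complex_def)
    have "polar_facet n \<sigma> \<in> polar_complex n C" using s by (auto simp: polar_complex_def)
    then have "polar_facet n \<sigma> = F" using F s by (auto simp: facets_def)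
    then show "F \<in> polar_facet n ` C" using s by auto
  qed
next
  show "polar_facet n ` C \<subseteq> facets (polar_complex n C)"
  proof
    fix F assume "F \<in> polar_facet n ` C"
    then obtain \<sigma> where s: "\<sigma> \<in> C" "F = polar_facet n \<sigma>" by auto
    have "\<forall>G\<in>polar_complex n C. F \<subseteq> G \<longrightarrow> G = F"
    proof (intro ballI impI)
      fix G assume G: "G \<in> polar_complex n C" "F \<subseteq> G"
      then obtain \<sigma>' where s': "\<sigma>' \<in> C" "G \<subseteq> polar_facet n \<sigma>'" by (auto simp: polar_complex_def)
      have "\<sigma> = \<sigma>'" using polar_facet_sub[of \<sigma> n \<sigma>'] assms s s' G by blast
      then show "G = F" using s s' G by auto
    qed
    then show "F \<in> facets (polar_complex n C)" using s by (auto simp: facets_def polar_complex_def)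
  qed
qed

lemma shell_from_potential:
  fixes C :: "nat set set" and \<Phi> :: "nat set \<Rightarrow> real"
  assumes CP: "C \<subseteq> Pow {1..n}" and inj: "inj_on \<Phi> C"
  and flip: "\<And>\<sigma> \<sigma>'. \<sigma>\<in>C \<Longrightarrow> \<sigma>'\<in>C \<Longrightarrow> \<Phi> \<sigma>' < \<Phi> \<sigma> \<Longrightarrow>
      \<exists>m\<in>{1..n}. (m\<in>\<sigma> \<longleftrightarrow> m\<notin>\<sigma>') \<and> flipm m \<sigma> \<in> C \<and> \<Phi> (flipm m \<sigma>) < \<Phi> \<sigma>"
  shows "shellable (polar_complex n C) (int n - 1)"
proof -
  have finC: "finite C" using CP by (meson finite_Pow_iff finite_atLeastAtMost finite_subset)
  obtain xs where xs: "set xs = C" "distinct xs" using finite_distinct_list[OF finC] by blast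
  define cs where "cs = sort_key \<Phi> xs"
  have cs_set: "set cs = C" and cs_d: "distinct cs" using xs by (auto simp: cs_def)
  have cs_sorted: "sorted (map \<Phi> cs)" by (simp add: cs_def)
  have mono: "\<Phi> (cs!i) < \<Phi> (cs!j)" if "i < j" "j < length cs" for i j
  proof -
    have "\<Phi> (cs!i) \<le> \<Phi> (cs!j)" using sorted_nth_mono[OF cs_sorted, of i j] that by simp
    moreover have "cs!i \<noteq> cs!j" using cs_d that by (simp add: nth_eq_iff_index_eq)
    moreover have "cs!i \<in> C" "cs!j \<in> C" using that cs_set by auto
    ultimately show ?thesis using inj by (metis inj_onD order_le_imp_less_or_eq)
  qed
  define Fs where "Fs = map (polar_facet n) cs"
  have pf_inj: "inj_on (polar_facet n) C"
  proof (rule inj_onI)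
    fix x y assume "x \<in> C" "y \<in> C" "polar_facet n x = polar_facet n y"
    then show "x = y" using CP polar_facet_sub[of x n y] by blast
  qed
  have Fs_d: "distinct Fs" unfolding Fs_def using cs_d pf_inj cs_set by (simp add: distinct_map)
  have Fs_set: "set Fs = facets (polar_complex n C)" unfolding Fs_def using cs_set facets_polar[OF CP] by simp
  have pure: "pure_dim (polar_complex n C) (int n - 1)"
    unfolding pure_dim_def facets_polar[OF CP] using polar_facet_card CP by auto
  have step: "pure_dim (gen_complex {Fs ! i} \<inter> gen_complex (set (take i Fs))) (int n - 1 - 1)"
    if i: "0 < i" "i < length Fs" for i
  proof (unfold pure_dim_def, intro ballI)
    let ?K = "gen_complex {Fs ! i} \<inter> gen_complex (set (take i Fs))"
    fix T assume T: "T \<in> facets ?K"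
    then have TK: "T \<in> ?K" by (simp add: facets_def)
    then have T1: "T \<subseteq> Fs ! i" by (simp add: gen_complex_def)
    from TK obtain S where S: "S \<in> set (take i Fs)" "T \<subseteq> S" by (auto simp: gen_complex_def)
    then obtain j where j: "j < i" "S = Fs ! j" using i by (auto simp: in_set_conv_nth)
    have il: "i < length cs" using i by (simp add: Fs_def)
    let ?s = "cs ! i" and ?s' = "cs ! j"
    have sC: "?s \<in> C" "?s' \<in> C" using il j cs_set by auto
    have lt: "\<Phi> ?s' < \<Phi> ?s" using mono j il by simp
    obtain m where m: "m \<in> {1..n}" "(m\<in>?s \<longleftrightarrow> m\<notin>?s')" "flipm m ?s \<in> C" "\<Phi> (flipm m ?s) < \<Phi> ?s"
      using flip[OF sC lt] by blast
    obtain k where k: "k < length cs" "cs ! k = flipm m ?s" using m(3) cs_set by (metis in_set_conv_nth)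
    have ki: "k < i"
    proof (rule ccontr)
      assume "\<not> k < i"
      then have "k = i \<or> i < k" by auto
      then show False using mono[of i k] k m(4) il by auto
    qed
    have sn: "?s \<subseteq> {1..n}" using sC CP by auto
    have Fi: "Fs ! i = polar_facet n ?s" "Fs ! k = polar_facet n (flipm m ?s)" "Fs ! j = polar_facet n ?s'"
      using il k j by (auto simp: Fs_def)
    define S0 where "S0 = Fs ! i \<inter> Fs ! k"
    have S0e: "S0 = polar_facet n ?s - {Inl m, Inr m}"
      unfolding S0_def Fi using polar_facet_flip[OF sn m(1)] by simp
    have S0K: "S0 \<in> ?K"
    proof -
      have "Fs ! k \<in> set (take i Fs)" using ki i k by (auto simp: in_set_conv_nth Fs_def intro!: exI[of _ k])
      then show ?thesis unfolding S0_def gen_complex_def by blast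
    qed
    have TS0: "T \<subseteq> S0"
    proof
      fix x assume x: "x \<in> T"
      then have x1: "x \<in> polar_facet n ?s" and x2: "x \<in> polar_facet n ?s'"
        using T1 S j Fi by auto
      have "x \<noteq> Inl m" "x \<noteq> Inr m" using x1 x2 m(2) by (auto simp: polar_facet_def)
      then show "x \<in> S0" using x1 S0e by auto
    qed
    have "T = S0" using T S0K TS0 by (auto simp: facets_def)
    moreover have "finite S0" "card S0 = n - 1"
      using S0e card_flip_inter[OF sn m(1)] polar_facet_card[OF sn] by auto
    moreover have "n \<ge> 1" using m(1) by auto
    ultimately show "finite T \<and> int (card T) = int n - 1 - 1 + 1" by auto
  qed
  show ?thesis unfolding shellable_def using pure Fs_d Fs_set step by blast
qed

definition NN :: "(nat \<Rightarrow> 'a::euclidean_space) \<Rightarrow> ('b \<Rightarrow> 'a) \<Rightarrow> nat + 'b \<Rightarrow> 'a" where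
  "NN w a j = (case j of Inl i \<Rightarrow> w i | Inr g \<Rightarrow> a g)"
definition Ofs :: "(nat \<Rightarrow> real) \<Rightarrow> ('b \<Rightarrow> real) \<Rightarrow> nat + 'b \<Rightarrow> real" where
  "Ofs h c j = (case j of Inl i \<Rightarrow> h i | Inr g \<Rightarrow> c g)"
definition JJ :: "nat \<Rightarrow> 'b set \<Rightarrow> (nat + 'b) set" where
  "JJ n G = Inl ` {1..n} \<union> Inr ` G"
definition tightset where
  "tightset n G w h a c z = {j \<in> JJ n G. NN w a j \<bullet> z = Ofs h c j}"
definition eps :: "nat set \<Rightarrow> nat + 'b \<Rightarrow> real" where
  "eps \<sigma> j = (case j of Inl i \<Rightarrow> (if i \<in> \<sigma> then -1 else 1) | Inr g \<Rightarrow> 1)"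
definition Acon where "Acon \<sigma> w a j = eps \<sigma> j *\<^sub>R NN w a j"
definition Bcon where "Bcon \<sigma> h c j = eps \<sigma> j * Ofs h c j"
definition Qset where
  "Qset n G w h a c \<sigma> = {x. \<forall>j\<in>JJ n G. Acon \<sigma> w a j \<bullet> x \<le> Bcon \<sigma> h c j}"
definition Qc where
  "Qc G a c = {x. \<forall>g\<in>G. a g \<bullet> x \<le> c g}"

lemma small_step:
  fixes g k :: "'j \<Rightarrow> real"
  assumes "finite K" "\<And>j. j \<in> K \<Longrightarrow> g j < 0"
  shows "\<exists>t>0. \<forall>j\<in>K. g j + t * k j < 0"
  using assms
proof (induction K rule: finite_induct)
  case empty then show ?case by (intro exI[of _ 1]) auto
next
  case (insert x F)
  then obtain t where t: "t > 0" "\<forall>j\<in>F. g j + t * k j < 0" by auto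
  define t1 where "t1 = (if k x \<le> 0 then 1 else - g x / (2 * k x))"
  have t1: "t1 > 0" "g x + t1 * k x < 0"
    using insert.prems[of x] by (auto simp: t1_def divide_simps)
  define s where "s = min t t1"
  have "s > 0" using t t1 by (simp add: s_def)
  moreover have "g j + s * k j < 0" if "j \<in> insert x F" for j
  proof -
    have mono: "g j + s * k j < 0" if "g j + r * k j < 0" "0 < s" "s \<le> r" "g j < 0" for r
    proof (cases "k j \<le> 0")
      case True then show ?thesis using that by (smt (verit) mult_nonneg_nonpos)
    next
      case False then have "s * k j \<le> r * k j" using that by (simp add: mult_right_mono)
      then show ?thesis using that by linarith
    qed
    show ?thesis
    proof (cases "j = x")
      case True then show ?thesis using mono[of t1] t1 \<open>s > 0\<close> insert.prems[of x] by (simp add: s_def)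
    next
      case False then have "j \<in> F" using that by simp
      then show ?thesis using mono[of t] t \<open>s > 0\<close> insert.prems[of j] by (simp add: s_def)
    qed
  qed
  ultimately show ?case by blast
qed

lemma eps_nz: "eps \<sigma> j \<noteq> 0" by (simp add: eps_def split: sum.splits)
lemma eps_sq: "eps \<sigma> j * eps \<sigma> j = 1" by (simp add: eps_def split: sum.splits)

lemma tight_iff:
  "Acon \<sigma> w a j \<bullet> z = Bcon \<sigma> h c j \<longleftrightarrow> NN w a j \<bullet> z = Ofs h c j"
  using eps_nz[of \<sigma> j] by (simp add: Acon_def Bcon_def)

lemma Acon_simps[simp]:
  "Acon \<sigma> w a (Inl i) = (if i \<in> \<sigma> then - w i else w i)"
  "Acon \<sigma> w a (Inr g) = a g"
  "Bcon \<sigma> h c (Inl i) = (if i \<in> \<sigma> then - h i else h i)"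
  "Bcon \<sigma> h c (Inr g) = c g"
  by (auto simp: Acon_def Bcon_def eps_def NN_def Ofs_def)

locale sweep =
  fixes n :: nat and w :: "nat \<Rightarrow> 'a::euclidean_space" and h :: "nat \<Rightarrow> real"
    and G :: "'b set" and a :: "'b \<Rightarrow> 'a" and c :: "'b \<Rightarrow> real" and X :: "'a set"
  assumes finG: "finite G"
    and QcX: "Qc G a c \<subseteq> X"
    and Qcb: "bounded (Qc G a c)"
    and indep: "\<And>z. z \<in> X \<Longrightarrow> findep (tightset n G w h a c z) (NN w a)"
begin

abbreviation "J \<equiv> JJ n G"
abbreviation "Q \<equiv> Qset n G w h a c"
abbreviation "A \<sigma> \<equiv> Acon \<sigma> w a"
abbreviation "B \<sigma> \<equiv> Bcon \<sigma> h c"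
abbreviation "T \<equiv> tightset n G w h a c"

lemma finJ: "finite J" using finG by (simp add: JJ_def)

lemma T_sub: "T z \<subseteq> J" by (auto simp: tightset_def)

lemma Q_sub: "Q \<sigma> \<subseteq> Qc G a c"
proof
  fix x assume x: "x \<in> Q \<sigma>"
  show "x \<in> Qc G a c" unfolding Qc_def
  proof (intro CollectI ballI)
    fix g assume "g \<in> G" then have "Inr g \<in> J" by (simp add: JJ_def)
    then show "a g \<bullet> x \<le> c g" using x by (force simp: Qset_def eps_def NN_def Ofs_def Acon_def Bcon_def)
  qed
qed

lemma Q_compact: "compact (Q \<sigma>)"
proof -
  have "closed (Q \<sigma>)"
  proof -
    have eq: "Q \<sigma> = (\<Inter>j\<in>J. {x. A \<sigma> j \<bullet> x \<le> B \<sigma> j})" by (auto simp: Qset_def)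
    have cl: "\<And>j. closed {x. A \<sigma> j \<bullet> x \<le> B \<sigma> j}" by (rule closed_halfspace_le)
    show ?thesis unfolding eq by (intro closed_INT ballI cl)
  qed
  moreover have "bounded (Q \<sigma>)" using Qcb Q_sub bounded_subset by blast
  ultimately show ?thesis by (simp add: compact_eq_bounded_closed)
qed

lemma findepA: assumes "z \<in> X" shows "findep (T z) (A \<sigma>)"
  unfolding Acon_def by (rule findep_scale[OF indep[OF assms]]) (rule eps_nz)

lemma A_tight: "j \<in> T z \<Longrightarrow> A \<sigma> j \<bullet> z = B \<sigma> j"
  using tight_iff[of \<sigma> w a j z h c] by (auto simp: tightset_def)

lemma min_lemma:
  fixes f :: 'a
  assumes z: "z \<in> Q \<sigma>" "z \<in> X" and zmin: "\<forall>y\<in>Q \<sigma>. f \<bullet> z \<le> f \<bullet> y"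
  shows "\<exists>lam. (\<forall>j\<in>T z. lam j \<ge> 0) \<and> f = - (\<Sum>j\<in>T z. lam j *\<^sub>R A \<sigma> j)"
proof -
  let ?D = "T z"
  have finD: "finite ?D" using finJ T_sub finite_subset by blast
  have cone: "f \<bullet> u \<ge> 0" if u: "\<forall>j\<in>?D. A \<sigma> j \<bullet> u \<le> 0" for u
  proof (rule ccontr)
    assume neg: "\<not> f \<bullet> u \<ge> 0"
    have slack: "A \<sigma> j \<bullet> z - B \<sigma> j < 0" if "j \<in> J - ?D" for j
    proof -
      have "A \<sigma> j \<bullet> z \<le> B \<sigma> j" using z(1) that by (auto simp: Qset_def)
      moreover have "A \<sigma> j \<bullet> z \<noteq> B \<sigma> j"
        using that tight_iff[of \<sigma> w a j z h c] by (auto simp: tightset_def)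
      ultimately show ?thesis by (simp add: less_le)
    qed
    obtain t where t: "t > 0" "\<forall>j\<in>J - ?D. (A \<sigma> j \<bullet> z - B \<sigma> j) + t * (A \<sigma> j \<bullet> u) < 0"
      using small_step[of "J - ?D" "\<lambda>j. A \<sigma> j \<bullet> z - B \<sigma> j" "\<lambda>j. A \<sigma> j \<bullet> u"] finJ slack by blast
    have "z + t *\<^sub>R u \<in> Q \<sigma>"
      unfolding Qset_def
    proof (intro CollectI ballI)
      fix j assume j: "j \<in> J"
      show "A \<sigma> j \<bullet> (z + t *\<^sub>R u) \<le> B \<sigma> j"
      proof (cases "j \<in> ?D")
        case True
        have "t * (A \<sigma> j \<bullet> u) \<le> 0" using u True t(1) by (simp add: mult_nonneg_nonpos)
        moreover have "A \<sigma> j \<bullet> z = B \<sigma> j" by (rule A_tight[OF True])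
        moreover have "A \<sigma> j \<bullet> (z + t *\<^sub>R u) = A \<sigma> j \<bullet> z + t * (A \<sigma> j \<bullet> u)"
          by (metis inner_add_right inner_scaleR_right)
        ultimately show ?thesis by linarith
      next
        case False
        then have "(A \<sigma> j \<bullet> z - B \<sigma> j) + t * (A \<sigma> j \<bullet> u) < 0" using t(2) j by blast
        moreover have "A \<sigma> j \<bullet> (z + t *\<^sub>R u) = A \<sigma> j \<bullet> z + t * (A \<sigma> j \<bullet> u)"
          by (metis inner_add_right inner_scaleR_right)
        ultimately show ?thesis by linarith
      qed
    qed
    then have "f \<bullet> z \<le> f \<bullet> (z + t *\<^sub>R u)" using zmin by blast
    then have "0 \<le> t * (f \<bullet> u)" by (simp add: inner_add_right)
    moreover have "t * (f \<bullet> u) < 0" using neg t(1) by (simp add: mult_pos_neg)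
    ultimately show False by linarith
  qed
  have fspan: "f \<in> span (A \<sigma> ` ?D)"
  proof (rule ccontr)
    assume "f \<notin> span (A \<sigma> ` ?D)"
    then obtain z0 where z0: "\<forall>j\<in>?D. A \<sigma> j \<bullet> z0 = 0" "f \<bullet> z0 > 0"
      using orth_witness by blast
    have "f \<bullet> (- z0) \<ge> 0" using cone[of "- z0"] z0(1) by simp
    then show False using z0(2) by simp
  qed
  obtain \<mu> where mu: "f = (\<Sum>j\<in>?D. \<mu> j *\<^sub>R A \<sigma> j)" using span_fam[OF finD fspan] by blast
  have "\<mu> m \<le> 0" if m: "m \<in> ?D" for m
  proof -
    obtain u where u: "\<forall>j\<in>?D. A \<sigma> j \<bullet> u = (if j = m then -1 else 0)"
      using findep_solve[OF findepA[OF z(2)], of \<sigma> "\<lambda>j. if j = m then -1 else 0"] by blast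
    have "f \<bullet> u = (\<Sum>j\<in>?D. \<mu> j * (A \<sigma> j \<bullet> u))" by (simp add: mu inner_sum_left)
    also have "\<dots> = (\<Sum>j\<in>?D. if j = m then - \<mu> m else 0)"
      by (rule sum.cong) (use u in auto)
    also have "\<dots> = - \<mu> m" using finD m by simp
    finally have "f \<bullet> u = - \<mu> m" .
    moreover have "f \<bullet> u \<ge> 0" using cone u by simp
    ultimately show ?thesis by simp
  qed
  then show ?thesis
    by (intro exI[of _ "\<lambda>j. - \<mu> j"]) (auto simp: mu sum_negf)
qed

lemma flip_lemma:
  fixes f :: 'a
  assumes \<sigma>: "\<sigma> \<subseteq> {1..n}" and z: "z \<in> Q \<sigma>" "z \<in> X" and zmin: "\<forall>y\<in>Q \<sigma>. f \<bullet> z \<le> f \<bullet> y"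
    and y: "y \<in> Q \<sigma>'" and lt: "f \<bullet> y < f \<bullet> z"
  shows "\<exists>m\<in>{1..n}. (m\<in>\<sigma> \<longleftrightarrow> m\<notin>\<sigma>') \<and>
           (\<exists>p. p \<in> atom n w h X (flipm m \<sigma>) \<and> p \<in> Qc G a c \<and> f \<bullet> p < f \<bullet> z)"
proof -
  let ?D = "T z"
  have finD: "finite ?D" using finJ T_sub finite_subset by blast
  obtain lam where lam: "\<forall>j\<in>?D. lam j \<ge> 0" "f = - (\<Sum>j\<in>?D. lam j *\<^sub>R A \<sigma> j)"
    using min_lemma[OF z zmin] by blast
  have fyz: "f \<bullet> (y - z) = - (\<Sum>j\<in>?D. lam j * (A \<sigma> j \<bullet> (y - z)))"
    by (subst lam(2)) (simp add: inner_sum_left)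
  have "f \<bullet> (y - z) < 0" using lt by (simp add: inner_diff_right)
  then have spos: "(\<Sum>j\<in>?D. lam j * (A \<sigma> j \<bullet> (y - z))) > 0" using fyz by linarith
  obtain j0 where j0: "j0 \<in> ?D" "lam j0 * (A \<sigma> j0 \<bullet> (y - z)) > 0"
  proof (rule ccontr)
    assume "\<not> thesis"
    then have "\<forall>j\<in>?D. lam j * (A \<sigma> j \<bullet> (y - z)) \<le> 0" using that by force
    then have "(\<Sum>j\<in>?D. lam j * (A \<sigma> j \<bullet> (y - z))) \<le> 0" by (simp add: sum_nonpos)
    then show False using spos by linarith
  qed
  have lj0: "lam j0 > 0" and Ayz: "A \<sigma> j0 \<bullet> (y - z) > 0"
    using j0(2) lam(1) j0(1) by (auto simp: zero_less_mult_iff)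
  have "A \<sigma> j0 \<bullet> z = B \<sigma> j0" by (rule A_tight[OF j0(1)])
  then have Ay: "A \<sigma> j0 \<bullet> y > B \<sigma> j0" using Ayz by (simp add: inner_diff_right)
  have j0J: "j0 \<in> J" using j0(1) T_sub by blast
  obtain m where m: "j0 = Inl m" "m \<in> {1..n}"
  proof (cases j0)
    case (Inl m) then show ?thesis using that j0J by (auto simp: JJ_def)
  next
    case (Inr g)
    then have "g \<in> G" using j0J by (auto simp: JJ_def)
    then have "Inr g \<in> J" by (simp add: JJ_def)
    then have "A \<sigma>' (Inr g) \<bullet> y \<le> B \<sigma>' (Inr g)" using y unfolding Qset_def by blast
    then show ?thesis using Ay Inr by simp
  qed
  have mdiff: "m\<in>\<sigma> \<longleftrightarrow> m\<notin>\<sigma>'"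
  proof -
    have "Inl m \<in> J" using m by (simp add: JJ_def)
    then have "A \<sigma>' (Inl m) \<bullet> y \<le> B \<sigma>' (Inl m)" using y unfolding Qset_def by blast
    then show ?thesis using Ay m(1) by (auto split: if_splits)
  qed
  define M where "M = (\<Sum>j\<in>?D. lam j) / lam j0 + 1"
  have sumge: "(\<Sum>j\<in>?D. lam j) \<ge> 0" using lam(1) by (simp add: sum_nonneg)
  have Mpos: "M > 0" using sumge lj0 by (simp add: M_def add_nonneg_pos)
  obtain u where u: "\<forall>j\<in>?D. A \<sigma> j \<bullet> u = (if j = j0 then M else -1)"
    using findep_solve[OF findepA[OF z(2)], of \<sigma> "\<lambda>j. if j = j0 then M else -1"] by blast
  have "f \<bullet> u = - (\<Sum>j\<in>?D. lam j * (A \<sigma> j \<bullet> u))"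
    by (subst lam(2)) (simp add: inner_sum_left)
  also have "(\<Sum>j\<in>?D. lam j * (A \<sigma> j \<bullet> u)) = (\<Sum>j\<in>?D. lam j * (if j = j0 then M else -1))"
    by (rule sum.cong) (use u in auto)
  also have "\<dots> = lam j0 * M + (\<Sum>j\<in>?D - {j0}. lam j * (if j = j0 then M else -1))"
    using finD j0(1) by (simp add: sum.remove)
  also have "(\<Sum>j\<in>?D - {j0}. lam j * (if j = j0 then M else -1)) = - (\<Sum>j\<in>?D - {j0}. lam j)"
    by (simp add: sum_negf)
  also have "(\<Sum>j\<in>?D - {j0}. lam j) = (\<Sum>j\<in>?D. lam j) - lam j0"
    using finD j0(1) by (simp add: sum_diff1)
  also have "lam j0 * M = (\<Sum>j\<in>?D. lam j) + lam j0"
    using lj0 by (simp add: M_def field_simps)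
  finally have fu: "f \<bullet> u = - 2 * lam j0" by simp
  have slack: "A \<sigma> j \<bullet> z - B \<sigma> j < 0" if "j \<in> J - ?D" for j
  proof -
    have "A \<sigma> j \<bullet> z \<le> B \<sigma> j" using z(1) that by (auto simp: Qset_def)
    moreover have "A \<sigma> j \<bullet> z \<noteq> B \<sigma> j"
      using that tight_iff[of \<sigma> w a j z h c] by (auto simp: tightset_def)
    ultimately show ?thesis by (simp add: less_le)
  qed
  obtain t where t: "t > 0" "\<forall>j\<in>J - ?D. (A \<sigma> j \<bullet> z - B \<sigma> j) + t * (A \<sigma> j \<bullet> u) < 0"
    using small_step[of "J - ?D" "\<lambda>j. A \<sigma> j \<bullet> z - B \<sigma> j" "\<lambda>j. A \<sigma> j \<bullet> u"] finJ slack by blast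
  define p where "p = z + t *\<^sub>R u"
  have Ap: "A \<sigma> j \<bullet> p = A \<sigma> j \<bullet> z + t * (A \<sigma> j \<bullet> u)" for j
    unfolding p_def by (metis inner_add_right inner_scaleR_right)
  have less: "A \<sigma> j \<bullet> p < B \<sigma> j" if "j \<in> J" "j \<noteq> j0" for j
  proof (cases "j \<in> ?D")
    case True
    then have "A \<sigma> j \<bullet> z = B \<sigma> j" "A \<sigma> j \<bullet> u = -1" using A_tight u that by auto
    then show ?thesis using Ap[of j] t(1) by simp
  next
    case False
    then have "(A \<sigma> j \<bullet> z - B \<sigma> j) + t * (A \<sigma> j \<bullet> u) < 0" using t(2) that by blast
    then show ?thesis using Ap[of j] by linarith
  qed
  have more: "A \<sigma> j0 \<bullet> p > B \<sigma> j0"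
  proof -
    have "A \<sigma> j0 \<bullet> z = B \<sigma> j0" "A \<sigma> j0 \<bullet> u = M" using A_tight u j0(1) by auto
    then show ?thesis using Ap[of j0] t(1) Mpos by simp
  qed
  have pQc: "p \<in> Qc G a c"
  proof -
    have "a g \<bullet> p < c g" if "g \<in> G" for g
      using less[of "Inr g"] that m(1) by (simp add: JJ_def)
    then show ?thesis by (auto simp: Qc_def less_imp_le)
  qed
  have pX: "p \<in> X" using pQc QcX by blast
  have fp: "f \<bullet> p < f \<bullet> z" using fu lj0 t(1) by (simp add: p_def inner_add_right)
  have pos: "p \<in> hyp_pos (w i) (h i)" if i: "i \<in> flipm m \<sigma>" for i
  proof -
    have iJ: "Inl i \<in> J" using i \<sigma> m(2) by (auto simp: JJ_def flipm_def split: if_splits)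
    show ?thesis
    proof (cases "i = m")
      case True
      then have "m \<notin> \<sigma>" using i by (simp add: flipm_def split: if_splits)
      then show ?thesis using more m(1) True by (simp add: hyp_pos_def)
    next
      case False
      then have "i \<in> \<sigma>" using i by (simp add: flipm_def split: if_splits)
      then show ?thesis using less[OF iJ] m(1) False by (simp add: hyp_pos_def)
    qed
  qed
  have neg: "p \<notin> hyp_pos (w i) (h i)" if i: "i \<in> {1..n} - flipm m \<sigma>" for i
  proof -
    have iJ: "Inl i \<in> J" using i by (auto simp: JJ_def)
    show ?thesis
    proof (cases "i = m")
      case True
      then have "m \<in> \<sigma>" using i by (simp add: flipm_def split: if_splits)
      then show ?thesis using more m(1) True by (simp add: hyp_pos_def)
    next
      case False
      then have "i \<notin> \<sigma>" using i by (simp add: flipm_def split: if_splits)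
      then show ?thesis using less[OF iJ] m(1) False by (simp add: hyp_pos_def)
    qed
  qed
  have patom: "p \<in> atom n w h X (flipm m \<sigma>)"
    unfolding atom_def using pos neg pX by blast
  show ?thesis using m(2) mdiff patom pQc fp by blast
qed

definition Vt where "Vt = {z \<in> X. card (T z) = DIM('a)}"

definition generic :: "'a \<Rightarrow> bool" where
  "generic f \<longleftrightarrow> (\<forall>S. S \<subseteq> NN w a ` J \<longrightarrow> card S < DIM('a) \<longrightarrow> f \<notin> span S) \<and>
                 (\<forall>v\<in>Vt. \<forall>v'\<in>Vt. v \<noteq> v' \<longrightarrow> f \<bullet> v \<noteq> f \<bullet> v')"

lemma Vt_finite: "finite Vt"
proof -
  have "inj_on T Vt"
  proof (rule inj_onI)
    fix z z' assume zz: "z \<in> Vt" "z' \<in> Vt" "T z = T z'"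
    have "z - z' = 0"
    proof (rule findep_zero[OF indep])
      show "z \<in> X" "card (T z) = DIM('a)" using zz by (auto simp: Vt_def)
      fix j assume j: "j \<in> T z"
      then have "NN w a j \<bullet> z = Ofs h c j" "NN w a j \<bullet> z' = Ofs h c j"
        using zz(3) by (auto simp: tightset_def)
      then show "NN w a j \<bullet> (z - z') = 0" by (simp add: inner_diff_right)
    qed
    then show "z = z'" by simp
  qed
  moreover have "T ` Vt \<subseteq> Pow J" using T_sub by auto
  then have "finite (T ` Vt)" using finJ finite_subset by blast
  ultimately show ?thesis using finite_imageD by blast
qed

lemma generic_exists: "\<exists>f. generic f"
proof -
  define F1 where "F1 = span ` {S. S \<subseteq> NN w a ` J \<and> card S < DIM('a)}"
  define F2 where "F2 = (\<lambda>(v, v'). {x. (v - v') \<bullet> x = 0}) ` {(v, v'). v \<in> Vt \<and> v' \<in> Vt \<and> v \<noteq> v'}"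
  have fin1: "finite F1"
  proof -
    have "{S. S \<subseteq> NN w a ` J \<and> card S < DIM('a)} \<subseteq> Pow (NN w a ` J)" by blast
    moreover have "finite (Pow (NN w a ` J))" using finJ by simp
    ultimately show ?thesis unfolding F1_def by (meson finite_imageI finite_subset)
  qed
  have fin2: "finite F2"
  proof -
    have "{(v, v'). v \<in> Vt \<and> v' \<in> Vt \<and> v \<noteq> v'} \<subseteq> Vt \<times> Vt" by blast
    then have "finite {(v, v'). v \<in> Vt \<and> v' \<in> Vt \<and> v \<noteq> v'}" using Vt_finite finite_subset by blast
    then show ?thesis unfolding F2_def by (rule finite_imageI)
  qed
  have neg1: "negligible Y" if "Y \<in> F1" for Y
  proof -
    from that obtain S where S0: "S \<in> {S. S \<subseteq> NN w a ` J \<and> card S < DIM('a)}" "Y = span S"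
      unfolding F1_def by (rule imageE)
    then have S: "S \<subseteq> NN w a ` J" "card S < DIM('a)" "Y = span S" by simp_all
    have "finite S" using S(1) finJ finite_subset by blast
    then have "dim S \<le> card S" using dim_le_card[of S S] by (simp add: span_base subsetI)
    then have "dim S < DIM('a)" using S(2) by simp
    then obtain b :: 'a where b: "b \<noteq> 0" "span S \<subseteq> {x. b \<bullet> x = 0}" using lowdim_subset_hyperplane by blast
    have nh: "negligible {x. b \<bullet> x = 0}" using b(1) by (intro negligible_hyperplane) simp
    have "negligible (span S)" by (rule negligible_subset[OF nh b(2)])
    then show ?thesis using S(3) by simp
  qed
  have neg2: "negligible Y" if "Y \<in> F2" for Y
  proof -
    from that obtain pr where pr: "pr \<in> {(v, v'). v \<in> Vt \<and> v' \<in> Vt \<and> v \<noteq> v'}"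
        "Y = (\<lambda>(v, v'). {x. (v - v') \<bullet> x = 0}) pr"
      unfolding F2_def by (rule imageE)
    obtain v v' where "pr = (v, v')" by (cases pr)
    then have vv: "v \<noteq> v'" "Y = {x. (v - v') \<bullet> x = 0}" using pr by auto
    have "v - v' \<noteq> 0" using vv(1) by simp
    then show ?thesis unfolding vv(2) by (intro negligible_hyperplane) simp
  qed
  have finU: "finite (F1 \<union> F2)" using fin1 fin2 by simp
  have negU: "\<And>Y. Y \<in> F1 \<union> F2 \<Longrightarrow> negligible Y" using neg1 neg2 by blast
  have nU: "negligible (\<Union>(F1 \<union> F2))" by (rule negligible_Union[OF finU negU])
  have "\<Union>(F1 \<union> F2) \<noteq> UNIV"
  proof
    assume "\<Union>(F1 \<union> F2) = UNIV"
    then show False using nU by simp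
  qed
  then obtain f where f: "f \<notin> \<Union>(F1 \<union> F2)" by blast
  have "generic f" unfolding generic_def
  proof (intro conjI allI impI ballI)
    fix S assume SS: "S \<subseteq> NN w a ` J" "card S < DIM('a)"
    have "span S \<in> F1" unfolding F1_def using SS by (intro imageI) simp
    then show "f \<notin> span S" using f by blast
  next
    fix v v' assume vv: "v \<in> Vt" "v' \<in> Vt" "v \<noteq> v'"
    then have "{x. (v - v') \<bullet> x = 0} \<in> F2" unfolding F2_def by (intro image_eqI[of _ _ "(v, v')"]) simp_all
    then have "(v - v') \<bullet> f \<noteq> 0" using f by blast
    then show "f \<bullet> v \<noteq> f \<bullet> v'" by (simp add: inner_diff_left inner_diff_right inner_commute)
  qed
  then show ?thesis by blast
qed

lemma sum_A_NN: "(\<Sum>j\<in>D. lam j *\<^sub>R A \<sigma> j) = (\<Sum>j\<in>D. (lam j * eps \<sigma> j) *\<^sub>R NN w a j)"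
  by (simp add: Acon_def)

lemma min_vertex:
  fixes f :: 'a
  assumes gen: "generic f" and z: "z \<in> Q \<sigma>" "z \<in> X" and zmin: "\<forall>y\<in>Q \<sigma>. f \<bullet> z \<le> f \<bullet> y"
  shows "\<exists>lam. (\<forall>j\<in>T z. lam j > 0) \<and> f = - (\<Sum>j\<in>T z. lam j *\<^sub>R A \<sigma> j) \<and> z \<in> Vt"
proof -
  let ?D = "T z"
  have finD: "finite ?D" using finJ T_sub finite_subset by blast
  obtain lam where lam: "\<forall>j\<in>?D. lam j \<ge> 0" "f = - (\<Sum>j\<in>?D. lam j *\<^sub>R A \<sigma> j)"
    using min_lemma[OF z zmin] by blast
  have fsum: "f = (\<Sum>j\<in>D'. (- lam j * eps \<sigma> j) *\<^sub>R NN w a j)"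
    if "D' \<subseteq> ?D" "\<forall>j\<in>?D - D'. lam j = 0" for D'
  proof -
    have "f = (\<Sum>j\<in>?D. (- lam j * eps \<sigma> j) *\<^sub>R NN w a j)"
      by (subst lam(2)) (simp add: sum_A_NN sum_negf[symmetric])
    also have "\<dots> = (\<Sum>j\<in>D'. (- lam j * eps \<sigma> j) *\<^sub>R NN w a j)"
      by (rule sum.mono_neutral_right) (use finD that in auto)
    finally show ?thesis .
  qed
  have nospan: "False" if "D' \<subseteq> ?D" "card D' < DIM('a)" "f \<in> span (NN w a ` D')" for D'
  proof -
    have "card (NN w a ` D') \<le> card D'" using card_image_le finD that(1) finite_subset by blast
    moreover have "NN w a ` D' \<subseteq> NN w a ` J" using that(1) T_sub by blast
    ultimately show False using gen that(2,3) unfolding generic_def by (meson le_less_trans)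
  qed
  have cardD: "card ?D = DIM('a)"
  proof (rule ccontr)
    assume "card ?D \<noteq> DIM('a)"
    then have "card ?D < DIM('a)" using findep_card[OF indep[OF z(2)]] by simp
    moreover have "f \<in> span (NN w a ` ?D)"
    proof -
      have e: "f = (\<Sum>j\<in>?D. (- lam j * eps \<sigma> j) *\<^sub>R NN w a j)" using fsum[of ?D] by simp
      show ?thesis unfolding e by (rule span_fam_mem)
    qed
    ultimately show False using nospan[of ?D] by blast
  qed
  have "lam m > 0" if m: "m \<in> ?D" for m
  proof (rule ccontr)
    assume "\<not> lam m > 0"
    then have l0: "lam m = 0" using lam(1) m by force
    have "f \<in> span (NN w a ` (?D - {m}))"
    proof -
      have e: "f = (\<Sum>j\<in>?D - {m}. (- lam j * eps \<sigma> j) *\<^sub>R NN w a j)" using fsum[of "?D - {m}"] l0 by auto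
      show ?thesis unfolding e by (rule span_fam_mem)
    qed
    moreover have "card (?D - {m}) < DIM('a)" using cardD m finD
      by (metis DIM_positive card_Diff1_less)
    ultimately show False using nospan[of "?D - {m}"] by blast
  qed
  then show ?thesis using lam(2) cardD z(2) by (auto simp: Vt_def)
qed

lemma eps_vals: "eps \<sigma> j = 1 \<or> eps \<sigma> j = -1" by (simp add: eps_def split: sum.splits)

lemma min_inj:
  fixes f :: 'a
  assumes gen: "generic f" and \<sigma>: "\<sigma> \<subseteq> {1..n}" "\<sigma>' \<subseteq> {1..n}"
    and z: "z \<in> Q \<sigma>" "z \<in> X" and zmin: "\<forall>y\<in>Q \<sigma>. f \<bullet> z \<le> f \<bullet> y"
    and z': "z' \<in> Q \<sigma>'" "z' \<in> X" and zmin': "\<forall>y\<in>Q \<sigma>'. f \<bullet> z' \<le> f \<bullet> y"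
    and eq: "f \<bullet> z = f \<bullet> z'"
  shows "\<sigma> = \<sigma>'"
proof -
  obtain lam where lam: "\<forall>j\<in>T z. lam j > 0" "f = - (\<Sum>j\<in>T z. lam j *\<^sub>R A \<sigma> j)" "z \<in> Vt"
    using min_vertex[OF gen z zmin] by blast
  obtain lam' where lam': "\<forall>j\<in>T z'. lam' j > 0" "f = - (\<Sum>j\<in>T z'. lam' j *\<^sub>R A \<sigma>' j)" "z' \<in> Vt"
    using min_vertex[OF gen z' zmin'] by blast
  have zz: "z = z'" using gen lam(3) lam'(3) eq unfolding generic_def by blast
  let ?D = "T z"
  have "(\<Sum>j\<in>?D. (lam' j * eps \<sigma>' j - lam j * eps \<sigma> j) *\<^sub>R NN w a j) =
        (\<Sum>j\<in>?D. (lam' j * eps \<sigma>' j) *\<^sub>R NN w a j) - (\<Sum>j\<in>?D. (lam j * eps \<sigma> j) *\<^sub>R NN w a j)"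
    by (simp add: scaleR_diff_left sum_subtractf)
  also have "\<dots> = 0" using lam(2) lam'(2) zz by (simp add: sum_A_NN)
  moreover have hh: "\<And>u. (\<Sum>j\<in>?D. u j *\<^sub>R NN w a j) = 0 \<Longrightarrow> \<forall>j\<in>?D. u j = 0"
    using indep[OF z(2)] by (simp add: findep_def)
  ultimately have "\<forall>j\<in>?D. lam' j * eps \<sigma>' j - lam j * eps \<sigma> j = 0"
    using hh[of "\<lambda>j. lam' j * eps \<sigma>' j - lam j * eps \<sigma> j"] by simp
  then have epseq: "eps \<sigma>' j = eps \<sigma> j" if "j \<in> ?D" for j
    using that lam(1) lam'(1) zz eps_vals[of \<sigma> j] eps_vals[of \<sigma>' j]
    by (smt (verit) mult_minus_right mult_cancel_left1)
  show ?thesis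
  proof (rule set_eqI)
    fix i
    show "i \<in> \<sigma> \<longleftrightarrow> i \<in> \<sigma>'"
    proof (cases "i \<in> {1..n}")
      case False then show ?thesis using \<sigma> by auto
    next
      case True
      then have iJ: "Inl i \<in> J" by (simp add: JJ_def)
      show ?thesis
      proof (cases "Inl i \<in> ?D")
        case True
        have "eps \<sigma>' (Inl i :: nat + 'b) = eps \<sigma> (Inl i :: nat + 'b)" using epseq[of "Inl i"] True by simp
        then show ?thesis by (cases "i \<in> \<sigma>"; cases "i \<in> \<sigma>'") (simp_all add: eps_def)
      next
        case False
        then have ne: "w i \<bullet> z \<noteq> h i" using iJ by (simp add: tightset_def NN_def Ofs_def)
        have c1: "A \<sigma> (Inl i) \<bullet> z \<le> B \<sigma> (Inl i)" using z(1) iJ unfolding Qset_def by blast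
        have c2: "A \<sigma>' (Inl i) \<bullet> z \<le> B \<sigma>' (Inl i)" using z'(1) iJ zz unfolding Qset_def by blast
        show ?thesis using c1 c2 ne by (auto split: if_splits)
      qed
    qed
  qed
qed

lemma atom_Q:
  assumes "x \<in> atom n w h X \<sigma>" "x \<in> Qc G a c"
  shows "x \<in> Q \<sigma>"
  unfolding Qset_def
proof (intro CollectI ballI)
  fix j assume j: "j \<in> J"
  show "A \<sigma> j \<bullet> x \<le> B \<sigma> j"
  proof (cases j)
    case (Inl i)
    then have i: "i \<in> {1..n}" using j by (auto simp: JJ_def)
    show ?thesis
    proof (cases "i \<in> \<sigma>")
      case True
      then have "w i \<bullet> x - h i > 0" using assms(1) by (auto simp: atom_def hyp_pos_def)
      then show ?thesis using Inl True by simp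
    next
      case False
      then have "\<not> w i \<bullet> x - h i > 0" using assms(1) i by (auto simp: atom_def hyp_pos_def)
      then show ?thesis using Inl False by simp
    qed
  next
    case (Inr g)
    then have "g \<in> G" using j by (auto simp: JJ_def)
    then show ?thesis using assms(2) Inr by (simp add: Qc_def)
  qed
qed

theorem sweep_shell:
  assumes wit: "\<And>\<sigma>. \<sigma> \<in> hyp_code n w h X \<Longrightarrow> atom n w h X \<sigma> \<inter> Qc G a c \<noteq> {}"
  shows "shellable (polar_complex n (hyp_code n w h X)) (int n - 1)"
proof -
  obtain f where gen: "generic f" using generic_exists by blast
  let ?C = "hyp_code n w h X"
  have CP: "?C \<subseteq> Pow {1..n}" by (auto simp: hyp_code_def)
  define zm where "zm \<sigma> = (SOME z. z \<in> Q \<sigma> \<and> (\<forall>y\<in>Q \<sigma>. f \<bullet> z \<le> f \<bullet> y))" for \<sigma>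
  have zm: "zm \<sigma> \<in> Q \<sigma> \<and> (\<forall>y\<in>Q \<sigma>. f \<bullet> zm \<sigma> \<le> f \<bullet> y)" if "\<sigma> \<in> ?C" for \<sigma>
  proof -
    have "Q \<sigma> \<noteq> {}" using wit[OF that] atom_Q by blast
    then have "\<exists>z\<in>Q \<sigma>. \<forall>y\<in>Q \<sigma>. f \<bullet> z \<le> f \<bullet> y"
      by (intro continuous_attains_inf Q_compact) (auto intro!: continuous_intros)
    then show ?thesis unfolding zm_def by (rule someI2_bex) auto
  qed
  have zmX: "zm \<sigma> \<in> X" if "\<sigma> \<in> ?C" for \<sigma> using zm[OF that] Q_sub QcX by blast
  define \<Phi> where "\<Phi> \<sigma> = f \<bullet> zm \<sigma>" for \<sigma>
  show ?thesis
  proof (rule shell_from_potential[OF CP])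
    show "inj_on \<Phi> ?C"
    proof (rule inj_onI)
      fix \<sigma> \<sigma>' assume s: "\<sigma> \<in> ?C" "\<sigma>' \<in> ?C" "\<Phi> \<sigma> = \<Phi> \<sigma>'"
      have sn1: "\<sigma> \<subseteq> {1..n}" using s(1) CP by blast
      have sn2: "\<sigma>' \<subseteq> {1..n}" using s(2) CP by blast
      have eq: "f \<bullet> zm \<sigma> = f \<bullet> zm \<sigma>'" using s(3) by (simp add: \<Phi>_def)
      show "\<sigma> = \<sigma>'"
        by (rule min_inj[OF gen sn1 sn2 conjunct1[OF zm[OF s(1)]] zmX[OF s(1)] conjunct2[OF zm[OF s(1)]]
             conjunct1[OF zm[OF s(2)]] zmX[OF s(2)] conjunct2[OF zm[OF s(2)]] eq])
    qed
  next
    fix \<sigma> \<sigma>' assume s: "\<sigma> \<in> ?C" "\<sigma>' \<in> ?C" "\<Phi> \<sigma>' < \<Phi> \<sigma>"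
    have sn: "\<sigma> \<subseteq> {1..n}" using s(1) CP by blast
    have lt: "f \<bullet> zm \<sigma>' < f \<bullet> zm \<sigma>" using s(3) by (simp add: \<Phi>_def)
    have ex: "\<exists>m\<in>{1..n}. (m\<in>\<sigma> \<longleftrightarrow> m\<notin>\<sigma>') \<and>
           (\<exists>p. p \<in> atom n w h X (flipm m \<sigma>) \<and> p \<in> Qc G a c \<and> f \<bullet> p < f \<bullet> zm \<sigma>)"
      by (rule flip_lemma[OF sn conjunct1[OF zm[OF s(1)]] zmX[OF s(1)] conjunct2[OF zm[OF s(1)]]
            conjunct1[OF zm[OF s(2)]] lt])
    from ex obtain m where m1: "m \<in> {1..n}" and mrest: "(m\<in>\<sigma> \<longleftrightarrow> m\<notin>\<sigma>') \<and>
           (\<exists>p. p \<in> atom n w h X (flipm m \<sigma>) \<and> p \<in> Qc G a c \<and> f \<bullet> p < f \<bullet> zm \<sigma>)"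
      by (rule bexE)
    have m2: "m\<in>\<sigma> \<longleftrightarrow> m\<notin>\<sigma>'" using mrest by (rule conjunct1)
    obtain p where p: "p \<in> atom n w h X (flipm m \<sigma>)" "p \<in> Qc G a c" "f \<bullet> p < f \<bullet> zm \<sigma>"
      using conjunct2[OF mrest] by (elim exE conjE)
    have "flipm m \<sigma> \<subseteq> {1..n}" using m1 sn by (auto simp: flipm_def)
    then have fl: "flipm m \<sigma> \<in> ?C"
      using p(1) unfolding hyp_code_def by blast
    have "p \<in> Q (flipm m \<sigma>)" by (rule atom_Q[OF p(1,2)])
    then have le: "f \<bullet> zm (flipm m \<sigma>) \<le> f \<bullet> p" using conjunct2[OF zm[OF fl]] by blast
    have lt2: "\<Phi> (flipm m \<sigma>) < \<Phi> \<sigma>" using le p(3) unfolding \<Phi>_def by linarith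
    show "\<exists>m\<in>{1..n}. (m\<in>\<sigma> \<longleftrightarrow> m\<notin>\<sigma>') \<and> flipm m \<sigma> \<in> ?C \<and> \<Phi> (flipm m \<sigma>) < \<Phi> \<sigma>"
    proof (rule bexI[OF _ m1])
      show "(m\<in>\<sigma> \<longleftrightarrow> m\<notin>\<sigma>') \<and> flipm m \<sigma> \<in> ?C \<and> \<Phi> (flipm m \<sigma>) < \<Phi> \<sigma>"
        using m2 fl lt2 by (intro conjI)
    qed
  qed
qed

end

lemma findep_reindex:
  assumes "findep D V" "inj_on \<phi> D" "\<And>j. j \<in> D \<Longrightarrow> V' (\<phi> j) = V j"
  shows "findep (\<phi> ` D) V'"
  unfolding findep_def
proof (intro conjI allI impI ballI)
  show "finite (\<phi> ` D)" using assms(1) by (simp add: findep_def)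
  fix u k assume u: "(\<Sum>k\<in>\<phi> ` D. u k *\<^sub>R V' k) = 0" and k: "k \<in> \<phi> ` D"
  have "(\<Sum>j\<in>D. u (\<phi> j) *\<^sub>R V j) = (\<Sum>k\<in>\<phi> ` D. u k *\<^sub>R V' k)"
    by (simp add: sum.reindex[OF assms(2)] assms(3))
  then have "(\<Sum>j\<in>D. u (\<phi> j) *\<^sub>R V j) = 0" using u by simp
  moreover have h: "\<And>u'. (\<Sum>j\<in>D. u' j *\<^sub>R V j) = 0 \<Longrightarrow> \<forall>j\<in>D. u' j = 0"
    using assms(1) by (simp add: findep_def)
  ultimately have "\<forall>j\<in>D. u (\<phi> j) = 0" using h[of "\<lambda>j. u (\<phi> j)"] by simp
  then show "u k = 0" using k by auto
qed

lemma indep_findep: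
  fixes V :: "'j \<Rightarrow> 'a::euclidean_space"
  assumes "finite D" "inj_on V D" "independent (V ` D)"
  shows "findep D V"
proof -
  have "findep (V ` D) (\<lambda>v. v)"
    unfolding findep_def
  proof (intro conjI allI impI ballI)
    show "finite (V ` D)" using assms by simp
    fix u v assume uv: "(\<Sum>v\<in>V ` D. u v *\<^sub>R v) = 0" "v \<in> V ` D"
    have ie: "\<forall>c. (\<Sum>v\<in>V ` D. c v *\<^sub>R v) = 0 \<longrightarrow> (\<forall>v\<in>V ` D. c v = 0)"
      using iffD1[OF independent_explicit assms(3)] by (rule conjunct2)
    show "u v = 0" using ie[rule_format, OF uv(1) uv(2)] .
  qed
  then have "findep (inv_into D V ` (V ` D)) (\<lambda>j. V j)"
    by (rule findep_reindex) (auto simp: assms(2) inj_on_inv_into f_inv_into_f)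
  moreover have "inv_into D V ` (V ` D) = D" using assms(2) by simp
  ultimately show ?thesis by simp
qed

lemma stable_findep:
  fixes w :: "nat \<Rightarrow> 'a::euclidean_space"
  assumes st: "stable_pair n w h X" and z: "z \<in> X"
  shows "findep {i \<in> {1..n}. w i \<bullet> z = h i} w"
proof -
  define S where "S = {i \<in> {1..n}. w i \<bullet> z = h i}"
  have finS: "finite S" by (simp add: S_def)
  define P where "P = (\<Inter>i\<in>S. hyp (w i) (h i))"
  have zP: "z \<in> P" by (auto simp: P_def S_def hyp_def)
  have Ssub: "S \<subseteq> {1..n}" by (auto simp: S_def)
  have stab: "\<forall>\<sigma>. \<sigma> \<subseteq> {1..n} \<longrightarrow> X \<inter> (\<Inter>i\<in>\<sigma>. hyp (w i) (h i)) \<noteq> {} \<longrightarrow>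
         aff_dim (\<Inter>i\<in>\<sigma>. hyp (w i) (h i)) = int DIM('a) - int (card \<sigma>)"
    using st by (simp add: stable_pair_def)
  have ne: "X \<inter> P \<noteq> {}" using zP z by blast
  have adP: "aff_dim P = int DIM('a) - int (card S)"
    using stab[rule_format, OF Ssub] ne unfolding P_def by simp
  define L where "L = {u. \<forall>x\<in>w ` S. orthogonal x u}"
  have subL: "subspace L" unfolding L_def by (rule subspace_orthogonal_to_vectors)
  have PL: "P = (+) z ` L"
  proof (rule set_eqI)
    fix x
    have "x \<in> P \<longleftrightarrow> x - z \<in> L"
      using zP by (auto simp: P_def hyp_def L_def orthogonal_def inner_diff_right)
    moreover have "x \<in> (+) z ` L \<longleftrightarrow> x - z \<in> L"
      by (auto intro: image_eqI[of _ _ "x - z"])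
    ultimately show "x \<in> P \<longleftrightarrow> x \<in> (+) z ` L" by simp
  qed
  have "aff_dim P = int (dim L)"
    unfolding PL aff_dim_translation_eq by (rule aff_dim_subspace[OF subL])
  then have dL: "int (dim L) = int DIM('a) - int (card S)" using adP by simp
  have L2: "{y \<in> UNIV. \<forall>x \<in> span (w ` S). orthogonal x y} = L"
  proof
    show "{y \<in> UNIV. \<forall>x \<in> span (w ` S). orthogonal x y} \<subseteq> L"
      unfolding L_def using span_base by blast
    show "L \<subseteq> {y \<in> UNIV. \<forall>x \<in> span (w ` S). orthogonal x y}"
    proof
      fix y assume y: "y \<in> L"
      show "y \<in> {y \<in> UNIV. \<forall>x \<in> span (w ` S). orthogonal x y}"
      proof (intro CollectI conjI UNIV_I ballI)
        fix x assume x: "x \<in> span (w ` S)"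
        have "orthogonal y x"
          by (rule orthogonal_to_span[OF x]) (use y in \<open>auto simp: L_def orthogonal_commute\<close>)
        then show "orthogonal x y" by (simp add: orthogonal_commute)
      qed
    qed
  qed
  have "dim {y \<in> UNIV. \<forall>x \<in> span (w ` S). orthogonal x y} + dim (span (w ` S)) = dim (UNIV :: 'a set)"
    by (rule dim_subspace_orthogonal_to_vectors) auto
  then have "dim L + dim (w ` S) = DIM('a)" unfolding L2 by simp
  then have dimS: "dim (w ` S) = card S" using dL by linarith
  have c1: "card (w ` S) \<le> card S" using finS by (rule card_image_le)
  have c2: "dim (w ` S) \<le> card (w ` S)" using finS by (intro dim_le_card) (auto intro: span_base)
  have cS: "card (w ` S) = card S" using c1 c2 dimS by linarith
  have inj: "inj_on w S" using cS finS by (simp add: eq_card_imp_inj_on)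
  have ind: "independent (w ` S)"
    by (rule card_le_dim_spanning[of "w ` S" "span (w ` S)"]) (use finS cS dimS in \<open>auto intro: span_base\<close>)
  show ?thesis unfolding S_def[symmetric] by (rule indep_findep[OF finS inj ind])
qed

lemma generic_offsets:
  fixes w :: "nat \<Rightarrow> 'a::euclidean_space" and a :: "'b \<Rightarrow> 'a"
  assumes finG: "finite G" and lohi: "\<And>g. g \<in> G \<Longrightarrow> lo g < hi g"
    and H0: "\<And>z. z \<in> X \<Longrightarrow> findep {i \<in> {1..n}. w i \<bullet> z = h i} w"
  shows "\<exists>c. (\<forall>g\<in>G. lo g < c g \<and> c g \<le> hi g) \<and> (\<forall>z\<in>X. findep (tightset n G w h a c z) (NN w a))"
  using finG lohi
proof (induction G rule: finite_induct)
  case empty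
  have "findep (tightset n {} w h a (\<lambda>_. 0) z) (NN w a)" if z: "z \<in> X" for z
  proof -
    have e: "tightset n {} w h a (\<lambda>_. 0) z = Inl ` {i \<in> {1..n}. w i \<bullet> z = h i}"
      by (auto simp: tightset_def JJ_def NN_def Ofs_def)
    show ?thesis unfolding e
      by (rule findep_reindex[OF H0[OF z]]) (auto simp: NN_def)
  qed
  then show ?case by blast
next
  case (insert g F)
  obtain c0 where c0: "\<forall>g\<in>F. lo g < c0 g \<and> c0 g \<le> hi g" "\<forall>z\<in>X. findep (tightset n F w h a c0 z) (NN w a)"
    using insert.IH insert.prems by auto
  define \<mu> where "\<mu> D = (SOME \<mu>. a g = (\<Sum>j\<in>D. \<mu> j *\<^sub>R NN w a j))" for D :: "(nat + 'b) set"
  define bad where "bad = (\<lambda>D. \<Sum>j\<in>D. \<mu> D j * Ofs h c0 j) ` Pow (JJ n F)"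
  have finJF: "finite (JJ n F)" using insert.hyps(1) by (simp add: JJ_def)
  have finbad: "finite bad" unfolding bad_def using finJF by simp
  have "infinite {lo g<..hi g}" using insert.prems[of g] by simp
  then have "infinite ({lo g<..hi g} - bad)" using finbad by (simp add: Diff_infinite_finite)
  then have "{lo g<..hi g} - bad \<noteq> {}" by (metis finite.emptyI)
  then obtain cg where cg: "cg \<in> {lo g<..hi g}" "cg \<notin> bad" by blast
  define c where "c = c0(g := cg)"
  have cF: "\<forall>g'\<in>insert g F. lo g' < c g' \<and> c g' \<le> hi g'"
    using c0(1) cg(1) insert.hyps(2) by (auto simp: c_def)
  have JJins: "JJ n (insert g F) = insert (Inr g) (JJ n F)" by (auto simp: JJ_def)
  have Ofs_eq: "Ofs h c j = Ofs h c0 j" if "j \<in> JJ n F" for j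
    using that insert.hyps(2) by (auto simp: JJ_def Ofs_def c_def)
  have notin: "Inr g \<notin> JJ n F" using insert.hyps(2) by (auto simp: JJ_def)
  have "findep (tightset n (insert g F) w h a c z) (NN w a)" if z: "z \<in> X" for z
  proof -
    let ?D = "tightset n F w h a c0 z"
    have Dsub: "?D \<subseteq> JJ n F" by (auto simp: tightset_def)
    have tD: "NN w a j \<bullet> z = Ofs h c0 j" if "j \<in> ?D" for j using that by (auto simp: tightset_def)
    have te: "tightset n (insert g F) w h a c z = (if a g \<bullet> z = cg then insert (Inr g) ?D else ?D)"
      using Ofs_eq notin by (auto simp: tightset_def JJins NN_def Ofs_def c_def split: if_splits)
    show ?thesis
    proof (cases "a g \<bullet> z = cg")
      case False then show ?thesis using te c0(2) z by simp
    next
      case True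
      have nsp: "NN w a (Inr g) \<notin> span (NN w a ` ?D)"
      proof
        assume "NN w a (Inr g) \<in> span (NN w a ` ?D)"
        then have "a g \<in> span (NN w a ` ?D)" by (simp add: NN_def)
        moreover have "finite ?D" using Dsub finJF finite_subset by blast
        ultimately have "\<exists>\<mu>. a g = (\<Sum>j\<in>?D. \<mu> j *\<^sub>R NN w a j)" by (intro span_fam)
        then have ag: "a g = (\<Sum>j\<in>?D. \<mu> ?D j *\<^sub>R NN w a j)" unfolding \<mu>_def by (rule someI_ex)
        have "a g \<bullet> z = (\<Sum>j\<in>?D. \<mu> ?D j * (NN w a j \<bullet> z))"
          by (subst ag) (simp add: inner_sum_left)
        also have "\<dots> = (\<Sum>j\<in>?D. \<mu> ?D j * Ofs h c0 j)" by (rule sum.cong) (simp_all add: tD)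
        finally have "cg \<in> bad" using True Dsub unfolding bad_def by auto
        then show False using cg(2) by simp
      qed
      have "findep (insert (Inr g) ?D) (NN w a)"
        by (rule findep_insert[OF c0(2)[rule_format, OF z] _ nsp]) (use Dsub notin in blast)
      then show ?thesis using te True by simp
    qed
  qed
  then show ?case using cF by blast
qed

theorem theoremD:
  fixes n :: nat and w :: "nat \<Rightarrow> 'a::euclidean_space" and h :: "nat \<Rightarrow> real" and X :: "'a set"
  assumes "stable_pair n w h X"
  shows "shellable (polar_complex n (hyp_code n w h X)) (int n - 1)"
proof -
  have st: "stable_pair n w h X" by (rule assms)
  have opX: "open X" and cvX: "convex X" using st by (auto simp: stable_pair_def)
  let ?C = "hyp_code n w h X"
  have finC: "finite ?C"
  proof -
    have "?C \<subseteq> Pow {1..n}" by (auto simp: hyp_code_def)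
    then show ?thesis by (rule finite_subset) simp
  qed
  define wit where "wit \<sigma> = (SOME x. x \<in> atom n w h X \<sigma>)" for \<sigma>
  have witA: "wit \<sigma> \<in> atom n w h X \<sigma>" if "\<sigma> \<in> ?C" for \<sigma>
  proof -
    have "atom n w h X \<sigma> \<noteq> {}" using that by (simp add: hyp_code_def)
    then show ?thesis unfolding wit_def by (simp add: some_in_eq)
  qed
  define W where "W = wit ` ?C"
  have finW: "finite W" using finC by (simp add: W_def)
  have WX: "W \<subseteq> X" using witA by (auto simp: W_def atom_def)
  have "\<forall>x\<in>X. \<exists>p. cbox (fst p) (snd p) \<subseteq> X \<and> x \<in> box (fst p) (snd p)"
  proof
    fix x assume "x \<in> X"
    then obtain l u where "cbox l u \<subseteq> X" "x \<in> box l u" by (rule open_contains_cbox[OF opX])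
    then show "\<exists>p. cbox (fst p) (snd p) \<subseteq> X \<and> x \<in> box (fst p) (snd p)" by (intro exI[of _ "(l, u)"]) simp
  qed
  then obtain bx where bx0: "\<forall>x\<in>X. cbox (fst (bx x)) (snd (bx x)) \<subseteq> X \<and> x \<in> box (fst (bx x)) (snd (bx x))"
    by (rule bchoice[THEN exE])
  have bx: "cbox (fst (bx x)) (snd (bx x)) \<subseteq> X \<and> x \<in> box (fst (bx x)) (snd (bx x))" if "x \<in> X" for x
    using bx0 that by blast
  have "\<forall>x. \<exists>S. finite S \<and> cbox (fst (bx x)) (snd (bx x)) = convex hull S"
  proof
    fix x
    obtain S where "finite S" "cbox (fst (bx x)) (snd (bx x)) = convex hull S"
      by (rule closed_interval_as_convex_hull)
    then show "\<exists>S. finite S \<and> cbox (fst (bx x)) (snd (bx x)) = convex hull S" by blast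
  qed
  then obtain Sx where Sx0: "\<forall>x. finite (Sx x) \<and> cbox (fst (bx x)) (snd (bx x)) = convex hull (Sx x)"
    by (rule choice[THEN exE])
  have Sx: "finite (Sx x) \<and> cbox (fst (bx x)) (snd (bx x)) = convex hull (Sx x)" for x
    using Sx0 by (rule spec)
  define V where "V = (\<Union>x\<in>W. Sx x)"
  have finV: "finite V" unfolding V_def using finW Sx by (intro finite_UN_I) simp_all
  define K where "K = convex hull V"
  have VX: "V \<subseteq> X"
  proof
    fix v assume "v \<in> V"
    then obtain x where x: "x \<in> W" "v \<in> Sx x" by (auto simp: V_def)
    have "v \<in> convex hull (Sx x)" using x(2) by (rule hull_inc)
    then have "v \<in> cbox (fst (bx x)) (snd (bx x))" using Sx by simp
    then show "v \<in> X" using bx[of x] x(1) WX by blast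
  qed
  have KX: "K \<subseteq> X" unfolding K_def by (rule hull_minimal[where S=convex, OF VX cvX])
  have WK: "x \<in> interior K" if x: "x \<in> W" for x
  proof -
    have "x \<in> box (fst (bx x)) (snd (bx x))" using bx[of x] x WX by blast
    then have xi: "x \<in> interior (cbox (fst (bx x)) (snd (bx x)))" by simp
    moreover have cbK: "cbox (fst (bx x)) (snd (bx x)) \<subseteq> K"
    proof -
      have "Sx x \<subseteq> V" using x by (auto simp: V_def)
      then have "convex hull (Sx x) \<subseteq> K" unfolding K_def by (rule hull_mono)
      then show ?thesis using Sx by simp
    qed
    show ?thesis using subsetD[OF interior_mono[OF cbK] xi] .
  qed
  have compK: "compact K" unfolding K_def using finV by (simp add: compact_convex_hull finite_imp_compact)
  have "polytope K" unfolding polytope_def K_def using finV by (intro exI[of _ V] conjI) simp_all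
  then have "polyhedron K" by (rule polytope_imp_polyhedron)
  then obtain F where F0: "finite F \<and> K = \<Inter>F \<and> (\<forall>hs\<in>F. \<exists>a b. a \<noteq> 0 \<and> hs = {x. a \<bullet> x \<le> b})"
    unfolding polyhedron_def by (rule exE)
  have F: "finite F" "K = \<Inter>F" "\<forall>hs\<in>F. \<exists>a b. a \<noteq> 0 \<and> hs = {x. a \<bullet> x \<le> b}"
    using F0 by simp_all
  define ab where "ab hs = (SOME p. fst p \<noteq> 0 \<and> hs = {x. fst p \<bullet> x \<le> snd p})" for hs :: "'a set"
  have ab: "fst (ab hs) \<noteq> 0 \<and> hs = {x. fst (ab hs) \<bullet> x \<le> snd (ab hs)}" if "hs \<in> F" for hs
  proof -
    have "\<exists>a b. a \<noteq> 0 \<and> hs = {x. a \<bullet> x \<le> b}" using F(3) that by (rule bspec)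
    then have "\<exists>p. fst p \<noteq> 0 \<and> hs = {x. fst p \<bullet> x \<le> snd p}" by (metis fst_conv snd_conv)
    then show ?thesis unfolding ab_def by (rule someI_ex)
  qed
  define ah where "ah hs = fst (ab hs)" for hs
  define bh where "bh hs = snd (ab hs)" for hs
  have WF: "ah hs \<bullet> x < bh hs" if "hs \<in> F" "x \<in> W" for hs x
  proof -
    have "K \<subseteq> hs" using F(2) that(1) by blast
    then have "interior K \<subseteq> interior hs" by (rule interior_mono)
    moreover have "interior hs = {x. ah hs \<bullet> x < bh hs}"
      using ab[OF that(1)] unfolding ah_def bh_def by (metis interior_halfspace_le)
    ultimately show ?thesis using WK[OF that(2)] by blast
  qed
  define lo where "lo hs = Max (insert (bh hs - 1) ((\<lambda>x. ah hs \<bullet> x) ` W))" for hs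
  have lo1: "lo hs < bh hs" if "hs \<in> F" for hs
    unfolding lo_def using finW WF[OF that] by (subst Max_less_iff) auto
  have lo2: "ah hs \<bullet> x \<le> lo hs" if "x \<in> W" for hs x
    unfolding lo_def using finW that by (intro Max_ge) auto
  have H0: "\<And>z. z \<in> X \<Longrightarrow> findep {i \<in> {1..n}. w i \<bullet> z = h i} w"
    by (rule stable_findep[OF st])
  obtain c where c: "\<forall>hs\<in>F. lo hs < c hs \<and> c hs \<le> bh hs"
      "\<forall>z\<in>X. findep (tightset n F w h ah c z) (NN w ah)"
  proof -
    have "\<exists>c. (\<forall>g\<in>F. lo g < c g \<and> c g \<le> bh g) \<and> (\<forall>z\<in>X. findep (tightset n F w h ah c z) (NN w ah))"
      by (rule generic_offsets[OF F(1)]) (rule lo1, assumption, rule H0, assumption)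
    then show ?thesis using that by blast
  qed
  have QcK: "Qc F ah c \<subseteq> K"
  proof
    fix x assume x: "x \<in> Qc F ah c"
    have "x \<in> hs" if hs: "hs \<in> F" for hs
    proof -
      have "ah hs \<bullet> x \<le> bh hs" using x c(1) hs by (force simp: Qc_def)
      then show ?thesis using ab[OF hs] unfolding ah_def bh_def by blast
    qed
    then show "x \<in> K" using F(2) by blast
  qed
  interpret sweep n w h F ah c X
  proof
    show "finite F" by (rule F(1))
    show "Qc F ah c \<subseteq> X" using QcK KX by blast
    show "bounded (Qc F ah c)" using QcK compact_imp_bounded[OF compK] bounded_subset by blast
    show "\<And>z. z \<in> X \<Longrightarrow> findep (tightset n F w h ah c z) (NN w ah)" using c(2) by blast
  qed
  show ?thesis
  proof (rule sweep_shell)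
    fix \<sigma> assume s: "\<sigma> \<in> ?C"
    have wW: "wit \<sigma> \<in> W" using s by (simp add: W_def)
    have "\<forall>hs\<in>F. ah hs \<bullet> wit \<sigma> \<le> c hs"
    proof
      fix hs assume hs: "hs \<in> F"
      have "ah hs \<bullet> wit \<sigma> \<le> lo hs" by (rule lo2[OF wW])
      moreover have "lo hs < c hs" using c(1) hs by blast
      ultimately show "ah hs \<bullet> wit \<sigma> \<le> c hs" by linarith
    qed
    then have "wit \<sigma> \<in> Qc F ah c" by (simp add: Qc_def)
    then show "atom n w h X \<sigma> \<inter> Qc F ah c \<noteq> {}" using witA[OF s] by blast
  qed
qed

end
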